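(* Let $n\ge 1$ and let $\pi$ be a uniformly random permutation of $[n]=\{1,\dots,n\}$. For $1\le i\le n$, let the reduction of $\pi$ to $[i]$ be the permutation $\sigma$ of $[i]$ defined by: for $j\in[i]$, $\sigma(j)=\pi^{m}(j)$, where $m\ge 1$ is the least positive integer with $\pi^{m}(j)\in[i]$ (equivalently, $\sigma$ is obtained by deleting the elements $i+1,\dots,n$ from the cycle notation of $\pi$). Let $X$ be the largest $i\in\{1,\dots,n\}$ such that the reduction of $\pi$ to $[i]$ is unicyclic (consists of a single cycle). Then \[\mathbb P(X=i)=\frac{1}{i}-\frac{1}{i+1}=\frac{1}{i(i+1)}\quad (1\le i\le n-1),\qquad \mathbb P(X=n)=\frac1n.\]
   Context: A permutation is unicyclic if its cycle decomposition consists of exactly one cycle. The reduction to $[1]$ is the identity on $\{1\}$, which counts as unicyclic. *)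

theory Defs
  imports "HOL-Probability.Probability" "HOL-Combinatorics.Permutations"
begin

definition reduction :: "(nat \<Rightarrow> nat) \<Rightarrow> nat \<Rightarrow> nat \<Rightarrow> nat" where
  "reduction p i j =
     (if j \<in> {1..i}
      then (p ^^ (LEAST m. m \<ge> 1 \<and> (p ^^ m) j \<in> {1..i})) j
      else j)"

definition unicyclic :: "(nat \<Rightarrow> nat) \<Rightarrow> nat set \<Rightarrow> bool" where
  "unicyclic \<sigma> S \<longleftrightarrow> S \<noteq> {} \<and> (\<forall>x\<in>S. \<forall>y\<in>S. \<exists>k. (\<sigma> ^^ k) x = y)"

definition X_stat :: "nat \<Rightarrow> (nat \<Rightarrow> nat) \<Rightarrow> nat" where
  "X_stat n p = Max {i \<in> {1..n}. unicyclic (reduction p i) {1..i}}"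

end

theory Submission
  imports Defs "HOL-Combinatorics.Cycles"
begin

definition reach :: "(nat \<Rightarrow> nat) \<Rightarrow> nat \<Rightarrow> nat \<Rightarrow> bool" where
  "reach f x y \<longleftrightarrow> (\<exists>k. (f ^^ k) x = y)"

lemma reach_trans: "reach f x y \<Longrightarrow> reach f y z \<Longrightarrow> reach f x z"
  unfolding reach_def by (metis comp_apply funpow_add)

lemma reach_step: "reach f (f x) y \<Longrightarrow> reach f x y"
  unfolding reach_def by (metis comp_apply funpow_Suc_right)

lemma red_ex:
  assumes "permutation p" "j \<in> {1..i}"
  shows "\<exists>m. m \<ge> 1 \<and> (p ^^ m) j \<in> {1..i}"
proof -
  obtain N where "(p ^^ N) = id" "N > 0" using permutation_is_nilpotent[OF assms(1)] by blast
  thus ?thesis using assms(2) by (intro exI[of _ N]) auto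
qed

lemma red_step:
  assumes "permutation p" "j \<in> {1..i}"
  shows "reduction p i j \<in> {1..i} \<and> (\<exists>m\<ge>1. reduction p i j = (p ^^ m) j
          \<and> (\<forall>m'. m' \<ge> 1 \<and> (p ^^ m') j \<in> {1..i} \<longrightarrow> m \<le> m'))"
proof -
  let ?m = "LEAST m. m \<ge> 1 \<and> (p ^^ m) j \<in> {1..i}"
  have "?m \<ge> 1 \<and> (p ^^ ?m) j \<in> {1..i}" using LeastI_ex[OF red_ex[OF assms]] .
  moreover have "\<forall>m'. m' \<ge> 1 \<and> (p ^^ m') j \<in> {1..i} \<longrightarrow> ?m \<le> m'"
    by (auto intro: Least_le)
  moreover have "reduction p i j = (p ^^ ?m) j" using assms(2) by (simp add: reduction_def)
  ultimately show ?thesis by auto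
qed

lemma red_iter:
  assumes "permutation p" "x \<in> {1..i}"
  shows "((reduction p i) ^^ k) x \<in> {1..i} \<and> (\<exists>M. ((reduction p i) ^^ k) x = (p ^^ M) x)"
proof (induction k)
  case 0 then show ?case using assms by (auto intro: exI[of _ 0])
next
  case (Suc k)
  then obtain M where M: "((reduction p i) ^^ k) x = (p ^^ M) x" and inI: "((reduction p i) ^^ k) x \<in> {1..i}" by blast
  from red_step[OF assms(1) inI] obtain m where
    "reduction p i (((reduction p i) ^^ k) x) \<in> {1..i}"
    "reduction p i (((reduction p i) ^^ k) x) = (p ^^ m) (((reduction p i) ^^ k) x)" by blast
  then show ?case using M by (auto simp: funpow_add[symmetric, THEN fun_cong, simplified comp_apply] intro: exI[of _ "m + M"])
qed

lemma red_reach_back: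
  assumes "permutation p" 
  shows "x \<in> {1..i} \<Longrightarrow> (p ^^ k) x \<in> {1..i} \<Longrightarrow> reach (reduction p i) x ((p ^^ k) x)"
proof (induction k arbitrary: x rule: less_induct)
  case (less k)
  show ?case
  proof (cases "k = 0")
    case True then show ?thesis by (auto simp: reach_def intro: exI[of _ 0])
  next
    case False
    from red_step[OF assms less.prems(1)] obtain m where m: "reduction p i x \<in> {1..i}" "m \<ge> 1"
      "reduction p i x = (p ^^ m) x" "\<forall>m'. m' \<ge> 1 \<and> (p ^^ m') x \<in> {1..i} \<longrightarrow> m \<le> m'" by blast
    have "m \<le> k" using m(4) False less.prems(2) by auto
    have eq: "(p ^^ k) x = (p ^^ (k - m)) ((p ^^ m) x)"
      using \<open>m \<le> k\<close> by (metis comp_apply funpow_add le_add_diff_inverse2)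
    have "reach (reduction p i) (reduction p i x) ((p ^^ (k - m)) (reduction p i x))"
      using less.IH[of "k - m" "reduction p i x"] m \<open>m \<le> k\<close> less.prems(2) eq by auto
    then show ?thesis using eq m(3) by (metis reach_step)
  qed
qed

lemma red_reach:
  assumes "permutation p" "x \<in> {1..i}" "y \<in> {1..i}"
  shows "reach (reduction p i) x y \<longleftrightarrow> reach p x y"
proof
  assume "reach (reduction p i) x y"
  then obtain k where "((reduction p i) ^^ k) x = y" by (auto simp: reach_def)
  then show "reach p x y" using red_iter[OF assms(1,2), of k] by (auto simp: reach_def)
next
  assume "reach p x y"
  then obtain k where "(p ^^ k) x = y" by (auto simp: reach_def)
  then show "reach (reduction p i) x y" using red_reach_back[OF assms(1,2), of k] assms(3) by auto
qed



lemma red_insert: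
  assumes "\<sigma> permutes {1..n}" "b \<in> {1..Suc n}"
  shows "reduction (Transposition.transpose (Suc n) b \<circ> \<sigma>) n = \<sigma>"
proof
  fix j
  let ?p = "Transposition.transpose (Suc n) b \<circ> \<sigma>"
  show "reduction ?p n j = \<sigma> j"
  proof (cases "j \<in> {1..n}")
    case False
    have "reduction ?p n j = j" unfolding reduction_def using False by (rule if_not_P)
    then show ?thesis using permutes_not_in[OF assms(1) False] by simp
  next
    case True
    have sj: "\<sigma> j \<in> {1..n}" by (simp only: permutes_in_image[OF assms(1)] True)
    have sN: "\<sigma> (Suc n) = Suc n" using assms(1) by (simp add: permutes_not_in)
    have red: "reduction ?p n j = (?p ^^ (LEAST m. m \<ge> 1 \<and> (?p ^^ m) j \<in> {1..n})) j"
      unfolding reduction_def using True by (rule if_P)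
    show ?thesis
    proof (cases "\<sigma> j = b")
      case False
      then have pj: "?p j = \<sigma> j" using sj by (auto simp: transpose_def)
      have "(LEAST m. m \<ge> 1 \<and> (?p ^^ m) j \<in> {1..n}) = 1"
      proof (rule Least_equality)
        show "1 \<le> (1::nat) \<and> (?p ^^ 1) j \<in> {1..n}" using pj sj by simp
      qed simp
      then show ?thesis using red pj by simp
    next
      case eq: True
      then have pj: "?p j = Suc n" by (auto simp: transpose_def)
      have pN: "?p (Suc n) = b" using sN by (auto simp: transpose_def)
      have p2: "(?p ^^ 2) j = b" using pj pN by (simp add: numeral_2_eq_2)
      have "(LEAST m. m \<ge> 1 \<and> (?p ^^ m) j \<in> {1..n}) = 2"
      proof (rule Least_equality)
        show "(2::nat) \<ge> 1 \<and> (?p ^^ 2) j \<in> {1..n}" using p2 eq sj by auto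
      next
        fix y assume "1 \<le> y \<and> (?p ^^ y) j \<in> {1..n}"
        moreover have "y \<noteq> 1" using pj \<open>1 \<le> y \<and> (?p ^^ y) j \<in> {1..n}\<close> by auto
        ultimately show "2 \<le> y" by linarith
      qed
      then show ?thesis using red p2 eq by simp
    qed
  qed
qed


definition U :: "(nat \<Rightarrow> nat) \<Rightarrow> nat \<Rightarrow> bool" where
  "U p i \<longleftrightarrow> (\<forall>x\<in>{1..i}. \<forall>y\<in>{1..i}. reach p x y)"

lemma U_mono: "U p i \<Longrightarrow> j \<le> i \<Longrightarrow> U p j"
  unfolding U_def by auto

lemma U_1: "U p 1"
  unfolding U_def reach_def by (auto intro: exI[of _ 0])

lemma permutes_funpow_in: "\<sigma> permutes S \<Longrightarrow> x \<in> S \<Longrightarrow> (\<sigma> ^^ k) x \<in> S"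
  by (induction k) (auto simp: permutes_in_image)

lemma perm_ins:
  assumes "\<sigma> permutes {1..n}" "b \<in> {1..Suc n}"
  shows "Transposition.transpose (Suc n) b \<circ> \<sigma> permutes {1..Suc n}"
proof -
  have "\<sigma> permutes {1..Suc n}" using assms(1) by (rule permutes_subset) auto
  moreover have "Transposition.transpose (Suc n) b permutes {1..Suc n}"
    using assms(2) by (intro permutes_swap_id) auto
  ultimately show ?thesis by (rule permutes_compose)
qed

lemma U_insert_le:
  assumes "\<sigma> permutes {1..n}" "b \<in> {1..Suc n}" "i \<le> n"
  shows "U (Transposition.transpose (Suc n) b \<circ> \<sigma>) i \<longleftrightarrow> U \<sigma> i"
proof -
  let ?p = "Transposition.transpose (Suc n) b \<circ> \<sigma>"
  have pp: "permutation ?p" using perm_ins[OF assms(1,2)] permutes_imp_permutation by blast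
  have "reach ?p x y \<longleftrightarrow> reach \<sigma> x y" if "x \<in> {1..i}" "y \<in> {1..i}" for x y
    using red_reach[OF pp, of x n y] red_insert[OF assms(1,2)] that assms(3) by auto
  then show ?thesis unfolding U_def by auto
qed

lemma U_insert_top:
  assumes "\<sigma> permutes {1..n}" "b \<in> {1..Suc n}" "n \<ge> 1"
  shows "U (Transposition.transpose (Suc n) b \<circ> \<sigma>) (Suc n) \<longleftrightarrow> U \<sigma> n \<and> b \<noteq> Suc n"
proof -
  let ?p = "Transposition.transpose (Suc n) b \<circ> \<sigma>"
  show ?thesis
  proof
    assume A: "U ?p (Suc n)"
    then have "U ?p n" using U_mono by auto
    then have "U \<sigma> n" using U_insert_le[OF assms(1,2)] by auto
    moreover have "b \<noteq> Suc n"
    proof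
      assume "b = Suc n"
      then have "?p = \<sigma>" by auto
      then have "reach \<sigma> 1 (Suc n)" using A assms(3) unfolding U_def by auto
      then obtain k where "(\<sigma> ^^ k) 1 = Suc n" unfolding reach_def by auto
      moreover have "(\<sigma> ^^ k) 1 \<in> {1..n}" using permutes_funpow_in[OF assms(1)] assms(3) by auto
      ultimately show False by auto
    qed
    ultimately show "U \<sigma> n \<and> b \<noteq> Suc n" by auto
  next
    assume B: "U \<sigma> n \<and> b \<noteq> Suc n"
    then have bn: "b \<in> {1..n}" using assms(2) by auto
    then obtain a where a: "a \<in> {1..n}" "\<sigma> a = b"
      using permutes_image[OF assms(1)] by (metis imageE)
    have sN: "\<sigma> (Suc n) = Suc n" using assms(1) by (simp add: permutes_not_in)
    have pa: "?p a = Suc n" using a by (auto simp: transpose_def)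
    have pN: "?p (Suc n) = b" using sN by (auto simp: transpose_def)
    have Un: "U ?p n" using B U_insert_le[OF assms(1,2)] by auto
    have r1: "reach ?p x (Suc n)" if "x \<in> {1..n}" for x
    proof -
      have "reach ?p x a" using Un that a(1) unfolding U_def by auto
      moreover have "reach ?p a (Suc n)" using pa unfolding reach_def by (intro exI[of _ 1]) simp
      ultimately show ?thesis by (rule reach_trans)
    qed
    have r2: "reach ?p (Suc n) y" if "y \<in> {1..n}" for y
    proof -
      have "reach ?p b y" using Un that bn unfolding U_def by auto
      then show ?thesis using pN by (metis reach_step)
    qed
    have r0: "reach ?p (Suc n) (Suc n)" unfolding reach_def by (intro exI[of _ 0]) simp
    show "U ?p (Suc n)" unfolding U_def
    proof (intro ballI)
      fix x y assume "x \<in> {1..Suc n}" "y \<in> {1..Suc n}"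
      then consider "x \<in> {1..n}" "y \<in> {1..n}" | "x = Suc n" "y \<in> {1..n}" | "x \<in> {1..n}" "y = Suc n"
        | "x = Suc n" "y = Suc n" by fastforce
      then show "reach ?p x y"
      proof cases
        case 1 then show ?thesis using Un unfolding U_def by auto
      next
        case 2 then show ?thesis using r2 by auto
      next
        case 3 then show ?thesis using r1 by auto
      next
        case 4 then show ?thesis using r0 by auto
      qed
    qed
  qed
qed


lemma inj_g:
  "inj_on (\<lambda>(b, \<sigma>). Transposition.transpose (Suc n) b \<circ> \<sigma>) ({1..Suc n} \<times> {\<sigma>. \<sigma> permutes {1..n}})"
proof (rule inj_onI)
  fix z1 z2
  assume z1: "z1 \<in> {1..Suc n} \<times> {\<sigma>. \<sigma> permutes {1..n}}" and z2: "z2 \<in> {1..Suc n} \<times> {\<sigma>. \<sigma> permutes {1..n}}"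
    and eq0: "(\<lambda>(b, \<sigma>). Transposition.transpose (Suc n) b \<circ> \<sigma>) z1 = (\<lambda>(b, \<sigma>). Transposition.transpose (Suc n) b \<circ> \<sigma>) z2"
  obtain b \<sigma> where bs: "z1 = (b, \<sigma>)" by (cases z1)
  obtain c \<tau> where ct: "z2 = (c, \<tau>)" by (cases z2)
  have s: "\<sigma> permutes {1..n}" and t: "\<tau> permutes {1..n}" using z1 z2 bs ct by auto
  have eq: "Transposition.transpose (Suc n) b \<circ> \<sigma> = Transposition.transpose (Suc n) c \<circ> \<tau>"
    using eq0 bs ct by simp
  have "\<sigma> (Suc n) = Suc n" "\<tau> (Suc n) = Suc n" using s t by (auto simp: permutes_not_in)
  then have "b = c" using fun_cong[OF eq, of "Suc n"] by (auto simp: transpose_def split: if_splits)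
  moreover have "\<sigma> = \<tau>"
  proof
    fix x show "\<sigma> x = \<tau> x" using fun_cong[OF eq, of x] \<open>b = c\<close>
      by (metis comp_apply transpose_involutory)
  qed
  ultimately show "z1 = z2" using bs ct by simp
qed

lemma perms_img:
  "{p. p permutes {1..Suc n}} = (\<lambda>(b, \<sigma>). Transposition.transpose (Suc n) b \<circ> \<sigma>) ` ({1..Suc n} \<times> {\<sigma>. \<sigma> permutes {1..n}})"
proof -
  have "{1..Suc n} = insert (Suc n) {1..n}" by auto
  then show ?thesis using permutes_insert[of "Suc n" "{1..n}"] by (auto simp: Sigma_def)
qed

lemma card_filter:
  "card {p. p permutes {1..Suc n} \<and> Q p} =
   card {z \<in> {1..Suc n} \<times> {\<sigma>. \<sigma> permutes {1..n}}. Q ((\<lambda>(b, \<sigma>). Transposition.transpose (Suc n) b \<circ> \<sigma>) z)}"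
proof -
  let ?g = "\<lambda>(b, \<sigma>). Transposition.transpose (Suc n) b \<circ> \<sigma>"
  let ?D = "{1..Suc n} \<times> {\<sigma>. \<sigma> permutes {1..n}}"
  have "{p. p permutes {1..Suc n} \<and> Q p} = {p \<in> ?g ` ?D. Q p}"
    using perms_img[of n] by auto
  also have "\<dots> = ?g ` {z \<in> ?D. Q (?g z)}" by blast
  finally have "{p. p permutes {1..Suc n} \<and> Q p} = ?g ` {z \<in> ?D. Q (?g z)}" .
  moreover have "inj_on ?g {z \<in> ?D. Q (?g z)}" by (rule inj_on_subset[OF inj_g]) auto
  ultimately show ?thesis by (simp add: card_image)
qed

lemma count_U:
  "1 \<le> i \<Longrightarrow> i \<le> n \<Longrightarrow> i * card {p. p permutes {1..n} \<and> U p i} = fact n"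
proof (induction n arbitrary: i)
  case 0 then show ?case by simp
next
  case (Suc n)
  let ?g = "\<lambda>(b, \<sigma>). Transposition.transpose (Suc n) b \<circ> \<sigma>"
  let ?D = "{1..Suc n} \<times> {\<sigma>. \<sigma> permutes {1..n}}"
  have fin: "finite {\<sigma>. \<sigma> permutes {1..n} \<and> U \<sigma> j}" for j
    using finite_permutations[of "{1..n}"] by (rule rev_finite_subset) auto
  show ?case
  proof (cases "i = 1")
    case True
    then have "{p. p permutes {1..Suc n} \<and> U p i} = {p. p permutes {1..Suc n}}" using U_1 by auto
    then show ?thesis using True card_permutations[of "{1..Suc n}" "Suc n"] by simp
  next
    case False
    show ?thesis
    proof (cases "i \<le> n")
      case True
      have "{z \<in> ?D. U (?g z) i} = {1..Suc n} \<times> {\<sigma>. \<sigma> permutes {1..n} \<and> U \<sigma> i}"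
        using U_insert_le True by auto
      then have "card {p. p permutes {1..Suc n} \<and> U p i} = Suc n * card {\<sigma>. \<sigma> permutes {1..n} \<and> U \<sigma> i}"
        using card_filter[of n "\<lambda>p. U p i"] by (simp add: card_cartesian_product)
      then have "i * card {p. p permutes {1..Suc n} \<and> U p i} = Suc n * (i * card {\<sigma>. \<sigma> permutes {1..n} \<and> U \<sigma> i})"
        by (simp only: mult.left_commute)
      then show ?thesis using Suc.IH[of i] Suc.prems True by simp
    next
      case False
      then have i: "i = Suc n" using Suc.prems by simp
      have n1: "n \<ge> 1" using \<open>i \<noteq> 1\<close> i by simp
      have "{z \<in> ?D. U (?g z) i} = {1..n} \<times> {\<sigma>. \<sigma> permutes {1..n} \<and> U \<sigma> n}"
        using U_insert_top[OF _ _ n1] i by auto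
      then have "card {p. p permutes {1..Suc n} \<and> U p i} = n * card {\<sigma>. \<sigma> permutes {1..n} \<and> U \<sigma> n}"
        using card_filter[of n "\<lambda>p. U p i"] by (simp add: card_cartesian_product)
      then have "i * card {p. p permutes {1..Suc n} \<and> U p i} = Suc n * (n * card {\<sigma>. \<sigma> permutes {1..n} \<and> U \<sigma> n})"
        using i by (simp only: mult.left_commute)
      then show ?thesis using Suc.IH[of n] n1 i by simp
    qed
  qed
qed


lemma unicyclic_iff:
  assumes "permutation p"
  shows "unicyclic (reduction p i) {1..i} \<longleftrightarrow> 1 \<le> i \<and> U p i"
proof -
  have "(\<forall>x\<in>{1..i}. \<forall>y\<in>{1..i}. \<exists>k. (reduction p i ^^ k) x = y) \<longleftrightarrow> U p i"
    using red_reach[OF assms] unfolding U_def reach_def[symmetric] by auto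
  moreover have "{1..i} \<noteq> {} \<longleftrightarrow> 1 \<le> i" by auto
  ultimately show ?thesis unfolding unicyclic_def by blast
qed

lemma X_iff:
  assumes "n \<ge> 1" "p permutes {1..n}" "1 \<le> i" "i \<le> n"
  shows "X_stat n p = i \<longleftrightarrow> U p i \<and> (i < n \<longrightarrow> \<not> U p (Suc i))"
proof -
  have pp: "permutation p" using assms(2) permutes_imp_permutation by blast
  let ?A = "{i \<in> {1..n}. unicyclic (reduction p i) {1..i}}"
  have A: "?A = {i \<in> {1..n}. U p i}" using unicyclic_iff[OF pp] by auto
  have fin: "finite ?A" by simp
  have ne: "1 \<in> ?A" using A U_1 assms(1) by auto
  have X: "X_stat n p = Max ?A" by (simp add: X_stat_def)
  show ?thesis
  proof
    assume "X_stat n p = i"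
    moreover have mA: "Max ?A \<in> ?A" by (rule Max_in[OF fin]) (use ne in blast)
    ultimately have "i \<in> ?A" using X by metis
    moreover have "\<not> U p (Suc i)" if "i < n"
    proof
      assume "U p (Suc i)"
      then have "Suc i \<in> ?A" using A that by auto
      then have "Suc i \<le> Max ?A" using fin by (rule Max_ge[rotated])
      then show False using X \<open>X_stat n p = i\<close> by simp
    qed
    ultimately show "U p i \<and> (i < n \<longrightarrow> \<not> U p (Suc i))" using A by auto
  next
    assume H: "U p i \<and> (i < n \<longrightarrow> \<not> U p (Suc i))"
    have "Max ?A = i"
    proof (rule Max_eqI[OF fin])
      fix j assume "j \<in> ?A"
      then have j: "j \<le> n" "U p j" using A by auto
      show "j \<le> i"
      proof (rule ccontr)
        assume "\<not> j \<le> i"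
        then have "U p (Suc i)" "i < n" using U_mono[OF j(2)] j(1) by auto
        then show False using H by auto
      qed
    next
      show "i \<in> ?A" using A H assms by auto
    qed
    then show "X_stat n p = i" using X by simp
  qed
qed

theorem mainTheorem1:
  fixes n i :: nat
  assumes "n \<ge> 1"
  defines "M \<equiv> pmf_of_set {p. p permutes {1..n}}"
  shows "(1 \<le> i \<and> i \<le> n - 1 \<longrightarrow>
            measure_pmf.prob M {p. X_stat n p = i} = 1 / real i - 1 / real (i + 1)
          \<and> measure_pmf.prob M {p. X_stat n p = i} = 1 / (real i * real (i + 1)))
       \<and> measure_pmf.prob M {p. X_stat n p = n} = 1 / real n"
proof -
  let ?P = "{p. p permutes {1..n}}"
  define C where "C j = card {p. p permutes {1..n} \<and> U p j}" for j
  have finP: "finite ?P" by (rule finite_permutations) simp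
  have neP: "?P \<noteq> {}" using permutes_id by blast
  have cardP: "card ?P = fact n" using card_permutations[of "{1..n}" n] by simp
  have prob: "measure_pmf.prob M A = card (?P \<inter> A) / fact n" for A
    unfolding M_def using measure_pmf_of_set[OF neP finP, of A] cardP by simp
  have Cr: "real (C j) = fact n / real j" if "1 \<le> j" "j \<le> n" for j
  proof -
    have "real j * real (C j) = fact n" using count_U[OF that] unfolding C_def
      by (metis of_nat_fact of_nat_mult)
    then show ?thesis using that by (simp add: field_simps)
  qed
  have fn: "(fact n :: real) \<noteq> 0" by simp
  have part1: "measure_pmf.prob M {p. X_stat n p = i} = 1 / real i - 1 / real (i + 1)"
    if i: "1 \<le> i" "i \<le> n - 1"
  proof -
    have "?P \<inter> {p. X_stat n p = i} = {p. p permutes {1..n} \<and> U p i} - {p. p permutes {1..n} \<and> U p (Suc i)}"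
    proof -
      have Xi: "X_stat n p = i \<longleftrightarrow> U p i \<and> \<not> U p (Suc i)" if "p permutes {1..n}" for p
        using X_iff[OF assms(1) that i(1)] i assms by auto
      show ?thesis using Xi by auto
    qed
    moreover have sub: "{p. p permutes {1..n} \<and> U p (Suc i)} \<subseteq> {p. p permutes {1..n} \<and> U p i}"
      using U_mono by auto
    moreover have "finite {p. p permutes {1..n} \<and> U p i}" using finP by (rule rev_finite_subset) auto
    ultimately have "card (?P \<inter> {p. X_stat n p = i}) = C i - C (Suc i)"
      unfolding C_def by (simp add: card_Diff_subset finite_subset)
    moreover have "C (Suc i) \<le> C i" unfolding C_def
      using sub \<open>finite {p. p permutes {1..n} \<and> U p i}\<close> by (rule card_mono[rotated])
    ultimately have E: "real (card (?P \<inter> {p. X_stat n p = i})) = fact n / real i - fact n / real (Suc i)"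
      using Cr[of i] Cr[of "Suc i"] i by (simp add: of_nat_diff)
    have "measure_pmf.prob M {p. X_stat n p = i} = (fact n / real i - fact n / real (Suc i)) / fact n"
      unfolding prob by (simp only: E)
    also have "\<dots> = 1 / real i - 1 / real (Suc i)" using fn by (simp add: diff_divide_distrib)
    finally show ?thesis by simp
  qed
  have part2: "measure_pmf.prob M {p. X_stat n p = n} = 1 / real n"
  proof -
    have "?P \<inter> {p. X_stat n p = n} = {p. p permutes {1..n} \<and> U p n}"
      using X_iff[OF assms(1) _ _ order.refl] assms by auto
    then have "real (card (?P \<inter> {p. X_stat n p = n})) = fact n / real n"
      using Cr[of n] assms unfolding C_def by simp
    then show ?thesis unfolding prob using fn by simp
  qed
  show ?thesis
  proof (intro conjI impI)
    assume i: "1 \<le> i \<and> i \<le> n - 1"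
    show "measure_pmf.prob M {p. X_stat n p = i} = 1 / real i - 1 / real (i + 1)" using part1 i by auto
    show "measure_pmf.prob M {p. X_stat n p = i} = 1 / (real i * real (i + 1))"
      using part1 i by (simp add: field_simps)
  next
    show "measure_pmf.prob M {p. X_stat n p = n} = 1 / real n" by (rule part2)
  qed
qed


end
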